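(* Let $d\ge2$ and $\gamma>0$. For $N\ge c(\gamma)$, $P$-almost surely on the event $\{T_N<\gamma N^{2d}\}$ there exist $x_* = z_*e_{d+1}$ with $|z_*|\le N^{2d+1}$ and a $*$-path contained in $U\cap X_{[0,T_N]}$ starting at $x_*$ and ending in $S(x_*,[\sqrt N])$, where $U = \big[-2[\sqrt N],2[\sqrt N]\big]e_1 + \mathbb{Z}e_{d+1}$ (viewed as a subset of $E$).
   Context: $\mathbb{T}=(\mathbb{Z}/N\mathbb{Z})^d$, $E=\mathbb{T}\times\mathbb{Z}$, $P$ the law of simple random walk $X_\cdot$ on $E$ started uniformly on $\mathbb{T}\times\{0\}$; $X_{[0,n]} = \{X_0,\dots,X_n\}$. $e_1,\dots,e_{d+1}$ is the canonical basis (images in $E$, with $e_{d+1}$ the vertical direction). A finite $S\subset E$ disconnects $E$ if for large $M$, $\mathbb{T}\times(-\infty,-M]$ and $\mathbb{T}\times[M,\infty)$ are in distinct connected components of $E\setminus S$; $T_N = \inf\{n\ge0: X_{[0,n]}\text{ disconnects }E\}$. Two points are $*$-neighbors if their $\ell^\infty$-distance is 1; a $*$-path is a finite sequence of consecutive $*$-neighbors. $S(x,r)$ is the $\ell^\infty$-sphere of radius $r$ centered at $x$. $[\cdot]$ denotes integer part. *)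

theory Defs
  imports "HOL-Probability.Probability"
begin

text \<open>Points of E = (Z/NZ)^d x Z are pairs (v, z): v :: nat => int with v i in {0..N-1}
  for i < d (coordinate i of the torus, i = 0 corresponding to e_1) and v i = 0 for i >= d;
  z :: int is the vertical coordinate (direction e_{d+1}).\<close>

type_synonym pt = "(nat \<Rightarrow> int) \<times> int"

definition Tor :: "nat \<Rightarrow> nat \<Rightarrow> (nat \<Rightarrow> int) set" where
  "Tor N d = {v. (\<forall>i<d. 0 \<le> v i \<and> v i < int N) \<and> (\<forall>i\<ge>d. v i = 0)}"

definition Ecyl :: "nat \<Rightarrow> nat \<Rightarrow> pt set" where
  "Ecyl N d = Tor N d \<times> UNIV"

definition move :: "nat \<Rightarrow> nat \<Rightarrow> pt \<Rightarrow> nat \<Rightarrow> pt" where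
  "move N d x k =
     (if k < 2 * d then
        (let i = k div 2; s = (if even k then 1 else -1) in
          ((fst x)(i := (fst x i + s) mod int N), snd x))
      else if k = 2 * d then (fst x, snd x + 1)
      else (fst x, snd x - 1))"

definition adj :: "nat \<Rightarrow> nat \<Rightarrow> pt \<Rightarrow> pt \<Rightarrow> bool" where
  "adj N d x y \<longleftrightarrow> x \<in> Ecyl N d \<and> (\<exists>k<2 * d + 2. y = move N d x k)"

definition walk :: "nat \<Rightarrow> nat \<Rightarrow> pt \<times> nat stream \<Rightarrow> nat \<Rightarrow> pt" where
  "walk N d \<omega> n = fold (\<lambda>k x. move N d x k) (stake n (snd \<omega>)) (fst \<omega>)"

definition Pwalk :: "nat \<Rightarrow> nat \<Rightarrow> (pt \<times> nat stream) measure" where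
  "Pwalk N d = measure_pmf (pmf_of_set (Tor N d \<times> {0}))
      \<Otimes>\<^sub>M stream_space (measure_pmf (pmf_of_set {0..<2 * d + 2}))"

definition trace :: "nat \<Rightarrow> nat \<Rightarrow> pt \<times> nat stream \<Rightarrow> nat \<Rightarrow> pt set" where
  "trace N d \<omega> n = walk N d \<omega> ` {0..n}"

definition disconnects :: "nat \<Rightarrow> nat \<Rightarrow> pt set \<Rightarrow> bool" where
  "disconnects N d S \<longleftrightarrow>
     (\<exists>M0. \<forall>M\<ge>M0. \<forall>x y. x \<in> Ecyl N d - S \<and> snd x \<le> - M \<and> y \<in> Ecyl N d - S \<and> snd y \<ge> M
        \<longrightarrow> (x, y) \<notin> ({(a, b). a \<notin> S \<and> b \<notin> S \<and> adj N d a b})\<^sup>*)"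

definition TN :: "nat \<Rightarrow> nat \<Rightarrow> pt \<times> nat stream \<Rightarrow> enat" where
  "TN N d \<omega> = (if \<exists>n. disconnects N d (trace N d \<omega> n)
                 then enat (LEAST n. disconnects N d (trace N d \<omega> n)) else \<infinity>)"

definition tdist :: "nat \<Rightarrow> int \<Rightarrow> int \<Rightarrow> int" where
  "tdist N a b = min ((a - b) mod int N) ((b - a) mod int N)"

definition linf :: "nat \<Rightarrow> nat \<Rightarrow> pt \<Rightarrow> pt \<Rightarrow> int" where
  "linf N d x y = max (Max ({tdist N (fst x i) (fst y i) | i. i < d} \<union> {0})) \<bar>snd x - snd y\<bar>"

definition star_nb :: "nat \<Rightarrow> nat \<Rightarrow> pt \<Rightarrow> pt \<Rightarrow> bool" where
  "star_nb N d x y \<longleftrightarrow> x \<in> Ecyl N d \<and> y \<in> Ecyl N d \<and> linf N d x y = 1"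

definition star_path :: "nat \<Rightarrow> nat \<Rightarrow> pt list \<Rightarrow> bool" where
  "star_path N d p \<longleftrightarrow> p \<noteq> [] \<and> set p \<subseteq> Ecyl N d \<and>
     (\<forall>i. Suc i < length p \<longrightarrow> star_nb N d (p ! i) (p ! Suc i))"

definition sphere_inf :: "nat \<Rightarrow> nat \<Rightarrow> pt \<Rightarrow> int \<Rightarrow> pt set" where
  "sphere_inf N d x r = {y \<in> Ecyl N d. linf N d x y = r}"

definition isqrt :: "nat \<Rightarrow> int" where
  "isqrt N = \<lfloor>sqrt (real N)\<rfloor>"

definition Uset :: "nat \<Rightarrow> nat \<Rightarrow> pt set" where
  "Uset N d = {x \<in> Ecyl N d. (\<forall>i. i \<noteq> 0 \<longrightarrow> fst x i = 0) \<and>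
      (\<exists>k. \<bar>k\<bar> \<le> 2 * isqrt N \<and> fst x 0 = k mod int N)}"

definition vert :: "int \<Rightarrow> pt" where
  "vert z = ((\<lambda>_. 0), z)"

end

theory Submission
  imports Defs "HOL-Analysis.Analysis"
begin


definition Sq :: "int \<times> int \<Rightarrow> complex set" where
  "Sq c = {q. of_int (fst c) - 1/2 \<le> Re q \<and> Re q \<le> of_int (fst c) + 1/2 \<and>
            of_int (snd c) - 1/2 \<le> Im q \<and> Im q \<le> of_int (snd c) + 1/2}"

lemma Sq_closed: "closed (Sq c)"
proof -
  have "Sq c = {q. Re q \<ge> of_int (fst c) - 1/2} \<inter> {q. Re q \<le> of_int (fst c) + 1/2}
     \<inter> {q. Im q \<ge> of_int (snd c) - 1/2} \<inter> {q. Im q \<le> of_int (snd c) + 1/2}"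
    unfolding Sq_def by auto
  then show ?thesis
    by (simp add: closed_Int closed_halfspace_Re_ge closed_halfspace_Re_le
        closed_halfspace_Im_ge closed_halfspace_Im_le)
qed

lemma bounded_ReIm: "bounded {q::complex. \<bar>Re q\<bar> \<le> A \<and> \<bar>Im q\<bar> \<le> B}"
proof -
  have "{q::complex. \<bar>Re q\<bar> \<le> A \<and> \<bar>Im q\<bar> \<le> B} \<subseteq> cball 0 (A + B)"
  proof
    fix q :: complex assume "q \<in> {q. \<bar>Re q\<bar> \<le> A \<and> \<bar>Im q\<bar> \<le> B}"
    then have "cmod q \<le> A + B" using cmod_le[of q] by simp
    then show "q \<in> cball 0 (A + B)" by (simp add: dist_norm)
  qed
  then show ?thesis by (rule bounded_subset[OF bounded_cball])
qed

lemma Sq_compact: "compact (Sq c)"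
proof -
  have "Sq c \<subseteq> {q::complex. \<bar>Re q\<bar> \<le> \<bar>of_int (fst c)\<bar> + 1 \<and> \<bar>Im q\<bar> \<le> \<bar>of_int (snd c)\<bar> + 1}"
    unfolding Sq_def by (auto simp: abs_le_iff)
  then have "bounded (Sq c)" using bounded_subset bounded_ReIm by blast
  then show ?thesis using Sq_closed by (simp add: compact_eq_bounded_closed)
qed

lemma Sq_meet:
  assumes "p \<in> Sq c" "p \<in> Sq c'"
  shows "\<bar>fst c - fst c'\<bar> \<le> 1 \<and> \<bar>snd c - snd c'\<bar> \<le> 1"
proof -
  have "\<bar>of_int (fst c) - of_int (fst c') :: real\<bar> \<le> 1"
    "\<bar>of_int (snd c) - of_int (snd c') :: real\<bar> \<le> 1"
    using assms unfolding Sq_def by (auto simp: abs_le_iff)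
  then show ?thesis by linarith
qed

lemma Sq_mix:
  assumes "p \<in> Sq (k,z)" "p \<in> Sq (k',z')"
  shows "p \<in> Sq (k',z)"
  using assms unfolding Sq_def by auto

lemma Sq_interior:
  assumes "\<And>c. p \<in> Sq c \<Longrightarrow> Sq c \<subseteq> Q"
  shows "p \<in> interior Q"
proof -
  define kp where "kp = \<lfloor>Re p + 1/2\<rfloor>"
  define km where "km = \<lceil>Re p - 1/2\<rceil>"
  define zp where "zp = \<lfloor>Im p + 1/2\<rfloor>"
  define zm where "zm = \<lceil>Im p - 1/2\<rceil>"
  have kp: "of_int kp \<le> Re p + 1/2" "Re p + 1/2 < of_int kp + 1"
    unfolding kp_def by linarith+
  have km: "Re p - 1/2 \<le> of_int km" "of_int km < Re p - 1/2 + 1"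
    unfolding km_def by linarith+
  have zp: "of_int zp \<le> Im p + 1/2" "Im p + 1/2 < of_int zp + 1"
    unfolding zp_def by linarith+
  have zm: "Im p - 1/2 \<le> of_int zm" "of_int zm < Im p - 1/2 + 1"
    unfolding zm_def by linarith+
  define e where "e = min (min (of_int kp + 1/2 - Re p) (Re p - of_int km + 1/2))
                          (min (of_int zp + 1/2 - Im p) (Im p - of_int zm + 1/2))"
  have e: "e > 0" unfolding e_def using kp km zp zm by auto
  have "ball p e \<subseteq> Q"
  proof
    fix q assume "q \<in> ball p e"
    then have d: "cmod (q - p) < e" by (simp add: dist_norm norm_minus_commute)
    have dr: "\<bar>Re q - Re p\<bar> < e" using abs_Re_le_cmod[of "q - p"] d by simp
    have di: "\<bar>Im q - Im p\<bar> < e" using abs_Im_le_cmod[of "q - p"] d by simp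
    define k where "k = (if Re q \<ge> Re p then kp else km)"
    define z where "z = (if Im q \<ge> Im p then zp else zm)"
    have "p \<in> Sq (k,z)" "q \<in> Sq (k,z)"
      unfolding Sq_def k_def z_def using kp km zp zm dr di
      by (auto simp: e_def abs_le_iff abs_less_iff)
    then show "q \<in> Q" using assms by blast
  qed
  then show ?thesis using e by (auto simp: mem_interior)
qed

definition box :: "int \<Rightarrow> int \<Rightarrow> (int \<times> int) set" where
  "box w M = {c. 0 \<le> fst c \<and> fst c \<le> w \<and> - M \<le> snd c \<and> snd c \<le> M}"

definition nn :: "int \<times> int \<Rightarrow> int \<times> int \<Rightarrow> bool" where
  "nn c c' \<longleftrightarrow> \<bar>fst c - fst c'\<bar> + \<bar>snd c - snd c'\<bar> = 1"

definition sadj :: "int \<times> int \<Rightarrow> int \<times> int \<Rightarrow> bool" where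
  "sadj c c' \<longleftrightarrow> c \<noteq> c' \<and> \<bar>fst c - fst c'\<bar> \<le> 1 \<and> \<bar>snd c - snd c'\<bar> \<le> 1"

definition Rw :: "int \<Rightarrow> int \<Rightarrow> (int \<times> int) set \<Rightarrow> ((int \<times> int) \<times> (int \<times> int)) set" where
  "Rw w M Bl = {(c,c'). c \<in> box w M - Bl \<and> c' \<in> box w M - Bl \<and> nn c c'}"

definition Rb :: "(int \<times> int) set \<Rightarrow> ((int \<times> int) \<times> (int \<times> int)) set" where
  "Rb Bl = {(c,c'). c \<in> Bl \<and> c' \<in> Bl \<and> sadj c c'}"

lemma finite_box: "finite (box w M)"
proof -
  have "box w M = {0..w} \<times> {-M..M}" unfolding box_def by auto
  then show ?thesis by simp
qed

lemma convex_ReIm_box: "convex {q::complex. a \<le> Re q \<and> Re q \<le> b \<and> c \<le> Im q \<and> Im q \<le> e}"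
proof -
  have "{q::complex. a \<le> Re q \<and> Re q \<le> b \<and> c \<le> Im q \<and> Im q \<le> e} =
     {q. Re q \<ge> a} \<inter> {q. Re q \<le> b} \<inter> {q. Im q \<ge> c} \<inter> {q. Im q \<le> e}" by auto
  then show ?thesis
    by (simp add: convex_Int convex_halfspace_Re_ge convex_halfspace_Re_le
        convex_halfspace_Im_ge convex_halfspace_Im_le)
qed

lemma closed_ReIm_box: "closed {q::complex. a \<le> Re q \<and> Re q \<le> b \<and> c \<le> Im q \<and> Im q \<le> e}"
proof -
  have "{q::complex. a \<le> Re q \<and> Re q \<le> b \<and> c \<le> Im q \<and> Im q \<le> e} =
     {q. Re q \<ge> a} \<inter> {q. Re q \<le> b} \<inter> {q. Im q \<ge> c} \<inter> {q. Im q \<le> e}" by auto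
  then show ?thesis
    by (simp add: closed_Int closed_halfspace_Re_ge closed_halfspace_Re_le
        closed_halfspace_Im_ge closed_halfspace_Im_le)
qed

lemma cc_convex:
  fixes K :: "'a::real_normed_vector set"
  assumes "convex K" "K \<subseteq> A" "x \<in> K" "y \<in> K"
  shows "connected_component A x y"
  unfolding connected_component_def
  by (rule exI[of _ K]) (simp add: assms convex_connected[OF assms(1)])

lemma duality:
  fixes w M :: int and Bl :: "(int \<times> int) set"
  assumes w: "0 \<le> w" and M: "0 \<le> M" and Blbox: "Bl \<subseteq> box w M"
    and Blrow: "\<And>c. c \<in> Bl \<Longrightarrow> snd c \<noteq> M \<and> snd c \<noteq> - M"
  shows "(\<exists>c0 c. c0 \<in> Bl \<and> fst c0 = 0 \<and> fst c = w \<and> (c0,c) \<in> (Rb Bl)\<^sup>*) \<or>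
         (\<exists>c0 c. c0 \<in> box w M - Bl \<and> snd c0 = - M \<and> snd c = M \<and> (c0,c) \<in> (Rw w M Bl)\<^sup>*)"
proof (rule ccontr)
  assume nt: "\<not> ?thesis"
  have noB: "fst c \<noteq> w" if "c0 \<in> Bl" "fst c0 = 0" "(c0,c) \<in> (Rb Bl)\<^sup>*" for c0 c
  proof
    assume "fst c = w"
    then have "\<exists>c0 c. c0 \<in> Bl \<and> fst c0 = 0 \<and> fst c = w \<and> (c0,c) \<in> (Rb Bl)\<^sup>*"
      using that by blast
    then show False using nt by blast
  qed
  have noW: "snd c \<noteq> M" if "c0 \<in> box w M - Bl" "snd c0 = - M" "(c0,c) \<in> (Rw w M Bl)\<^sup>*" for c0 c
  proof
    assume "snd c = M"
    then have "\<exists>c0 c. c0 \<in> box w M - Bl \<and> snd c0 = - M \<and> snd c = M \<and> (c0,c) \<in> (Rw w M Bl)\<^sup>*"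
      using that by blast
    then show False using nt by blast
  qed
  define R where "R = {c. \<exists>c0. c0 \<in> box w M - Bl \<and> snd c0 = - M \<and> (c0,c) \<in> (Rw w M Bl)\<^sup>*}"
  define B1 where "B1 = {c. \<exists>c0. c0 \<in> Bl \<and> fst c0 = 0 \<and> (c0,c) \<in> (Rb Bl)\<^sup>*}"
  have Rw_wh: "c \<in> box w M - Bl" if "(c0,c) \<in> (Rw w M Bl)\<^sup>*" "c0 \<in> box w M - Bl" for c0 c
    using that by (induct rule: rtrancl_induct) (auto simp: Rw_def)
  have Rb_bl: "c \<in> Bl" if "(c0,c) \<in> (Rb Bl)\<^sup>*" "c0 \<in> Bl" for c0 c
    using that by (induct rule: rtrancl_induct) (auto simp: Rb_def)
  have R_wh: "c \<in> box w M - Bl" if cR: "c \<in> R" for c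
  proof -
    from cR obtain c0 where c0: "c0 \<in> box w M - Bl" "(c0,c) \<in> (Rw w M Bl)\<^sup>*"
      unfolding R_def by blast
    show ?thesis by (rule Rw_wh[OF c0(2,1)])
  qed
  have R_step: "c' \<in> R" if cR: "c \<in> R" and c'w: "c' \<in> box w M - Bl" and cc: "c' = c \<or> nn c c'" for c c'
  proof -
    from cR obtain c0 where c0: "c0 \<in> box w M - Bl" "snd c0 = - M" "(c0,c) \<in> (Rw w M Bl)\<^sup>*"
      unfolding R_def by blast
    show ?thesis
    proof (cases "c' = c")
      case True then show ?thesis using cR by simp
    next
      case False
      then have "nn c c'" using cc by simp
      moreover have "c \<in> box w M - Bl" by (rule R_wh[OF cR])
      ultimately have "(c,c') \<in> Rw w M Bl" using c'w unfolding Rw_def by simp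
      then have "(c0,c') \<in> (Rw w M Bl)\<^sup>*" using c0(3) by simp
      then show ?thesis unfolding R_def using c0(1,2) by blast
    qed
  qed
  have R_bot: "c \<in> R" if "c \<in> box w M - Bl" "snd c = - M" for c
    unfolding R_def using that by blast
  have R_top: "snd c \<noteq> M" if cR: "c \<in> R" for c
  proof -
    from cR obtain c0 where c0: "c0 \<in> box w M - Bl" "snd c0 = - M" "(c0,c) \<in> (Rw w M Bl)\<^sup>*"
      unfolding R_def by blast
    show ?thesis by (rule noW[OF c0])
  qed
  have B1_bl: "c \<in> Bl" if cB: "c \<in> B1" for c
  proof -
    from cB obtain c0 where c0: "c0 \<in> Bl" "(c0,c) \<in> (Rb Bl)\<^sup>*"
      unfolding B1_def by blast
    show ?thesis by (rule Rb_bl[OF c0(2,1)])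
  qed
  have B1_step: "c' \<in> B1" if cB: "c \<in> B1" and c'b: "c' \<in> Bl" and sa: "sadj c c'" for c c'
  proof -
    from cB obtain c0 where c0: "c0 \<in> Bl" "fst c0 = 0" "(c0,c) \<in> (Rb Bl)\<^sup>*"
      unfolding B1_def by blast
    have "c \<in> Bl" by (rule B1_bl[OF cB])
    then have "(c,c') \<in> Rb Bl" using c'b sa unfolding Rb_def by simp
    then have "(c0,c') \<in> (Rb Bl)\<^sup>*" using c0(3) by simp
    then show ?thesis unfolding B1_def using c0(1,2) by blast
  qed
  have B1_left: "c \<in> B1" if "c \<in> Bl" "fst c = 0" for c
    unfolding B1_def using that by blast
  have B1_right: "fst c \<noteq> w" if cB: "c \<in> B1" for c
  proof -
    from cB obtain c0 where c0: "c0 \<in> Bl" "fst c0 = 0" "(c0,c) \<in> (Rb Bl)\<^sup>*"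
      unfolding B1_def by blast
    show ?thesis by (rule noB[OF c0])
  qed
  have finBl: "finite Bl" using Blbox finite_box by (rule finite_subset)
  have "R \<subseteq> box w M" using R_wh by blast
  then have finR: "finite R" using finite_box by (rule finite_subset)
  define LW where "LW = {q::complex. -1 \<le> Re q \<and> Re q \<le> -1/2 \<and> - of_int M - 1 \<le> Im q \<and> Im q \<le> of_int M}"
  define S where "S = LW \<union> (\<Union>c\<in>B1. Sq c)"
  define T where "T = {q::complex. Im q \<le> - of_int M - 1/2} \<union> {q. Im q \<ge> of_int M + 1/2}
     \<union> {q. Re q \<ge> of_int w + 1/2} \<union> (\<Union>c\<in>Bl - B1. Sq c)"
  define Q where "Q = (\<Union>c\<in>R. Sq c)"
  define a where "a = Complex 0 (- of_int M)"
  define b where "b = Complex 0 (of_int M)"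
  have "compact LW"
  proof -
    have "LW \<subseteq> {q::complex. \<bar>Re q\<bar> \<le> 1 \<and> \<bar>Im q\<bar> \<le> of_int M + 1}"
      unfolding LW_def by (auto simp: abs_le_iff)
    then have "bounded LW" using bounded_subset bounded_ReIm by blast
    moreover have "closed LW" unfolding LW_def by (rule closed_ReIm_box)
    ultimately show ?thesis by (simp add: compact_eq_bounded_closed)
  qed
  have "B1 \<subseteq> Bl" using B1_bl by blast
  then have finB1: "finite B1" using finBl by (rule finite_subset)
  have cS: "compact S" unfolding S_def
    using \<open>compact LW\<close> finB1
    by (intro compact_Un compact_UN Sq_compact) auto
  have cT: "closed T" unfolding T_def
    using finBl
    by (intro closed_Un closed_UN Sq_closed closed_halfspace_Re_ge closed_halfspace_Im_ge
        closed_halfspace_Im_le) (auto simp: Sq_closed)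
  have SqD: "of_int (fst c) - 1/2 \<le> Re p \<and> Re p \<le> of_int (fst c) + 1/2 \<and>
            of_int (snd c) - 1/2 \<le> Im p \<and> Im p \<le> of_int (snd c) + 1/2" if "p \<in> Sq c" for p c
    using that unfolding Sq_def by auto
  have Blb: "0 \<le> fst c \<and> fst c \<le> w \<and> - M + 1 \<le> snd c \<and> snd c \<le> M - 1" if "c \<in> Bl" for c
  proof -
    have "c \<in> box w M" using Blbox that by blast
    then show ?thesis using Blrow[OF that] unfolding box_def by auto
  qed
  have Blr: "0 \<le> real_of_int (fst c) \<and> real_of_int (fst c) \<le> of_int w \<and>
     - real_of_int M + 1 \<le> of_int (snd c) \<and> real_of_int (snd c) \<le> of_int M - 1" if "c \<in> Bl" for c
  proof -
    have h: "0 \<le> fst c" "fst c \<le> w" "- M + 1 \<le> snd c" "snd c \<le> M - 1" using Blb[OF that] by auto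
    show ?thesis using h[folded of_int_le_iff[where 'a=real]] by simp
  qed
  have B1r: "real_of_int (fst c) \<le> of_int w - 1" if "c \<in> B1" for c
  proof -
    have "fst c \<le> w - 1" using Blb[OF B1_bl[OF that]] B1_right[OF that] by auto
    then have "real_of_int (fst c) \<le> real_of_int (w - 1)" by (simp only: of_int_le_iff)
    then show ?thesis by simp
  qed
  have B2r: "1 \<le> real_of_int (fst c)" if "c \<in> Bl - B1" for c
  proof -
    have "fst c \<noteq> 0" using that B1_left by blast
    then have "1 \<le> fst c" using Blb[of c] that by auto
    then have "real_of_int 1 \<le> real_of_int (fst c)" by (simp only: of_int_le_iff)
    then show ?thesis by simp
  qed
  have wr: "0 \<le> real_of_int w" "0 \<le> real_of_int M" using w M by auto
  have meet_B1: "c' \<in> B1" if "c \<in> B1" "c' \<in> Bl" "p \<in> Sq c" "p \<in> Sq c'" for c c' p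
  proof (cases "c = c'")
    case True then show ?thesis using that by simp
  next
    case False
    then have "sadj c c'" using Sq_meet[OF that(3,4)] unfolding sadj_def by simp
    then show ?thesis using B1_step[OF that(1,2)] by simp
  qed
  have ST: "S \<inter> T = LW \<inter> {q. Im q \<le> - of_int M - 1/2}"
  proof
    show "LW \<inter> {q. Im q \<le> - of_int M - 1/2} \<subseteq> S \<inter> T" unfolding S_def T_def by auto
  next
    show "S \<inter> T \<subseteq> LW \<inter> {q. Im q \<le> - of_int M - 1/2}"
    proof
      fix q assume q: "q \<in> S \<inter> T"
      show "q \<in> LW \<inter> {q. Im q \<le> - of_int M - 1/2}"
      proof (cases "q \<in> LW")
        case True
        then have L: "-1 \<le> Re q" "Re q \<le> -1/2" "Im q \<le> of_int M" unfolding LW_def by auto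
        have "q \<in> T" using q by auto
        then have "Im q \<le> - of_int M - 1/2"
        proof (unfold T_def, elim UnE)
          fix q' assume "q \<in> (\<Union>c\<in>Bl - B1. Sq c)"
          then obtain c where "c \<in> Bl - B1" "q \<in> Sq c" by auto
          then show ?thesis using B2r[of c] SqD[of q c] L by linarith
        qed (use L wr in auto)
        then show ?thesis using True by auto
      next
        case False
        then obtain c where c: "c \<in> B1" "q \<in> Sq c" using q unfolding S_def by auto
        have cr: "real_of_int (fst c) \<le> of_int w - 1" "- real_of_int M + 1 \<le> of_int (snd c)"
          "real_of_int (snd c) \<le> of_int M - 1" using B1r[OF c(1)] Blr[OF B1_bl[OF c(1)]] by auto
        have "q \<in> T" using q by auto
        then have False
        proof (unfold T_def, elim UnE)
          assume "q \<in> (\<Union>c\<in>Bl - B1. Sq c)"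
          then obtain c' where "c' \<in> Bl - B1" "q \<in> Sq c'" by auto
          then show False using meet_B1 c by blast
        qed (use SqD[OF c(2)] cr in auto)
        then show ?thesis ..
      qed
    qed
  qed
  have conST: "connected (S \<inter> T)"
  proof -
    have "S \<inter> T = {q. -1 \<le> Re q \<and> Re q \<le> -1/2 \<and> - of_int M - 1 \<le> Im q \<and> Im q \<le> - of_int M - 1/2}"
      unfolding ST LW_def using wr by auto
    then show ?thesis by (simp add: convex_connected[OF convex_ReIm_box])
  qed
  have ccS: "connected_component (- S) a b"
  proof -
    have 1: "connected_component (- S) a (Complex (of_int w) (- of_int M))"
    proof (rule cc_convex[OF convex_ReIm_box[of 0 "of_int w" "- of_int M" "- of_int M"]])
      show "{q. 0 \<le> Re q \<and> Re q \<le> real_of_int w \<and> - real_of_int M \<le> Im q \<and> Im q \<le> - real_of_int M} \<subseteq> - S"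
      proof (clarify)
        fix q assume q: "0 \<le> Re q" "Re q \<le> real_of_int w" "- real_of_int M \<le> Im q" "Im q \<le> - real_of_int M" "q \<in> S"
        show False
        proof (cases "q \<in> LW")
          case True then show False using q unfolding LW_def by auto
        next
          case False
          then obtain c where c: "c \<in> B1" "q \<in> Sq c" using q(5) unfolding S_def by auto
          show False using SqD[OF c(2)] Blr[OF B1_bl[OF c(1)]] q by linarith
        qed
      qed
    qed (use wr in \<open>auto simp: a_def\<close>)
    have 2: "connected_component (- S) (Complex (of_int w) (- of_int M)) (Complex (of_int w) (of_int M))"
    proof (rule cc_convex[OF convex_ReIm_box[of "of_int w" "of_int w" "- of_int M" "of_int M"]])
      show "{q. of_int w \<le> Re q \<and> Re q \<le> real_of_int w \<and> - real_of_int M \<le> Im q \<and> Im q \<le> real_of_int M} \<subseteq> - S"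
      proof (clarify)
        fix q assume q: "of_int w \<le> Re q" "Re q \<le> real_of_int w" "- real_of_int M \<le> Im q" "Im q \<le> real_of_int M" "q \<in> S"
        show False
        proof (cases "q \<in> LW")
          case True then show False using q wr unfolding LW_def by auto
        next
          case False
          then obtain c where c: "c \<in> B1" "q \<in> Sq c" using q(5) unfolding S_def by auto
          show False using SqD[OF c(2)] B1r[OF c(1)] q by linarith
        qed
      qed
    qed (use wr in \<open>auto\<close>)
    have 3: "connected_component (- S) (Complex (of_int w) (of_int M)) b"
    proof (rule cc_convex[OF convex_ReIm_box[of 0 "of_int w" "of_int M" "of_int M"]])
      show "{q. 0 \<le> Re q \<and> Re q \<le> real_of_int w \<and> real_of_int M \<le> Im q \<and> Im q \<le> real_of_int M} \<subseteq> - S"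
      proof (clarify)
        fix q assume q: "0 \<le> Re q" "Re q \<le> real_of_int w" "real_of_int M \<le> Im q" "Im q \<le> real_of_int M" "q \<in> S"
        show False
        proof (cases "q \<in> LW")
          case True then show False using q unfolding LW_def by auto
        next
          case False
          then obtain c where c: "c \<in> B1" "q \<in> Sq c" using q(5) unfolding S_def by auto
          show False using SqD[OF c(2)] Blr[OF B1_bl[OF c(1)]] q by linarith
        qed
      qed
    qed (use wr in \<open>auto simp: b_def\<close>)
    show ?thesis by (rule connected_component_trans[OF connected_component_trans[OF 1 2] 3])
  qed
  have ccT: "connected_component (- T) a b"
  proof (rule cc_convex[OF convex_ReIm_box[of 0 0 "- of_int M" "of_int M"]])
    show "{q. 0 \<le> Re q \<and> Re q \<le> 0 \<and> - real_of_int M \<le> Im q \<and> Im q \<le> real_of_int M} \<subseteq> - T"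
    proof (clarify)
      fix q assume q: "0 \<le> Re q" "Re q \<le> 0" "- real_of_int M \<le> Im q" "Im q \<le> real_of_int M" "q \<in> T"
      from q(5) show False unfolding T_def
      proof (elim UnE)
        assume "q \<in> (\<Union>c\<in>Bl - B1. Sq c)"
        then obtain c where c: "c \<in> Bl - B1" "q \<in> Sq c" by auto
        show False using SqD[OF c(2)] B2r[OF c(1)] q by linarith
      qed (use q wr in auto)
    qed
  qed (use wr in \<open>auto simp: a_def b_def\<close>)
  have "connected_component (- (S \<union> T)) a b"
    by (rule Janiszewski[OF cS cT conST ccS ccT])
  then obtain K where K: "connected K" "K \<subseteq> - (S \<union> T)" "a \<in> K" "b \<in> K"
    unfolding connected_component_def by blast
  have "(0, - M) \<in> box w M" using w M unfolding box_def by auto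
  moreover have "(0, - M) \<notin> Bl" using Blrow[of "(0, - M)"] by auto
  ultimately have "(0, - M) \<in> box w M - Bl" by simp
  then have "(0, - M) \<in> R" using R_bot by simp
  moreover have "a \<in> Sq (0, - M)" unfolding a_def Sq_def by simp
  ultimately have aQ: "a \<in> Q" unfolding Q_def by blast
  have bQ: "b \<notin> Q"
  proof
    assume "b \<in> Q"
    then obtain c where c: "c \<in> R" "b \<in> Sq c" unfolding Q_def by blast
    have "real_of_int (fst c) - 1/2 \<le> 0" "0 \<le> real_of_int (fst c) + 1/2"
      "real_of_int (snd c) - 1/2 \<le> of_int M" "of_int M \<le> real_of_int (snd c) + 1/2"
      using c(2) unfolding Sq_def b_def by auto
    then have "snd c = M" by linarith
    then show False using R_top c(1) by blast
  qed
  have "K \<inter> frontier Q \<noteq> {}"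
    by (rule connected_Int_frontier) (use K aQ bQ in auto)
  then obtain p where p: "p \<in> K" "p \<in> frontier Q" by blast
  have clQ: "closed Q" unfolding Q_def using finR by (intro closed_UN) (auto simp: Sq_closed)
  then have "p \<in> Q" using p frontier_subset_closed by blast
  then obtain c where c: "c \<in> R" "p \<in> Sq c" unfolding Q_def by blast
  have pST: "p \<notin> S" "p \<notin> T" using p K by auto
  have cb: "0 \<le> fst c" "fst c \<le> w" "- M \<le> snd c" "snd c \<le> M - 1"
    using R_wh[OF c(1)] R_top[OF c(1)] unfolding box_def by auto
  have cbr: "0 \<le> real_of_int (fst c)" "- real_of_int M \<le> of_int (snd c)" "real_of_int (snd c) \<le> of_int M - 1"
    using cb[folded of_int_le_iff[where 'a=real]] by auto
  have allwh: "e \<in> box w M - Bl" if "p \<in> Sq e" for e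
  proof (rule ccontr)
    assume ne: "e \<notin> box w M - Bl"
    have pe: "of_int (fst e) - 1/2 \<le> Re p" "Re p \<le> of_int (fst e) + 1/2"
            "of_int (snd e) - 1/2 \<le> Im p" "Im p \<le> of_int (snd e) + 1/2" using SqD[OF that] by auto
    have pc: "of_int (fst c) - 1/2 \<le> Re p" "Re p \<le> of_int (fst c) + 1/2"
            "of_int (snd c) - 1/2 \<le> Im p" "Im p \<le> of_int (snd c) + 1/2" using SqD[OF c(2)] by auto
    consider "fst e < 0" | "fst e > w" | "snd e < - M" | "snd e > M" | "e \<in> Bl"
      using ne unfolding box_def by (auto simp: not_le)
    then show False
    proof cases
      case 1
      then have "real_of_int (fst e) \<le> -1" by linarith
      then have "p \<in> LW" unfolding LW_def using pe pc cbr by auto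
      then show False using pST unfolding S_def by auto
    next
      case 2
      then have "real_of_int (fst e) \<ge> of_int w + 1" by linarith
      then show False using pST pe unfolding T_def by auto
    next
      case 3
      then have "real_of_int (snd e) \<le> - of_int M - 1" by linarith
      then show False using pST pe unfolding T_def by auto
    next
      case 4
      then have "real_of_int (snd e) \<ge> of_int M + 1" by linarith
      then show False using pST pe unfolding T_def by auto
    next
      case 5
      then show False using pST that unfolding S_def T_def by (cases "e \<in> B1") auto
    qed
  qed
  have "p \<in> interior Q"
  proof (rule Sq_interior)
    fix c' assume pc': "p \<in> Sq c'"
    obtain k z where ckz: "c = (k, z)" by (cases c)
    obtain k' z' where ckz': "c' = (k', z')" by (cases c')
    have pm: "p \<in> Sq (k', z)" using Sq_mix c(2) pc' ckz ckz' by blast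
    have d1: "\<bar>k - k'\<bar> \<le> 1" "\<bar>z - z'\<bar> \<le> 1" using Sq_meet[OF c(2) pc'] ckz ckz' by auto
    have "(k', z) = c \<or> nn c (k', z)" using d1 ckz unfolding nn_def by auto
    then have m: "(k', z) \<in> R" using R_step[OF c(1) allwh[OF pm]] by blast
    have "c' = (k', z) \<or> nn (k', z) c'" using d1 ckz' unfolding nn_def by auto
    then have "c' \<in> R" using R_step[OF m allwh[OF pc']] by blast
    then show "Sq c' \<subseteq> Q" unfolding Q_def by blast
  qed
  then show False using p(2) unfolding frontier_def by auto
qed



lemma finite_Tor: "finite (Tor N d)"
proof -
  have "Tor N d \<subseteq> {v. \<forall>i. (i \<in> {..<d} \<longrightarrow> v i \<in> {0..<int N}) \<and> (i \<notin> {..<d} \<longrightarrow> v i = 0)}"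
  proof
    fix v assume "v \<in> Tor N d"
    then have h: "\<forall>i<d. 0 \<le> v i \<and> v i < int N" "\<forall>i\<ge>d. v i = 0" unfolding Tor_def by auto
    show "v \<in> {v. \<forall>i. (i \<in> {..<d} \<longrightarrow> v i \<in> {0..<int N}) \<and> (i \<notin> {..<d} \<longrightarrow> v i = 0)}"
      using h by (simp add: not_less)
  qed
  then show ?thesis using finite_set_of_finite_funs[of "{..<d}" "{0..<int N}" 0] finite_subset by blast
qed
lemma Tor_ne: "N > 0 \<Longrightarrow> (\<lambda>_. 0) \<in> Tor N d"
  unfolding Tor_def by auto

lemma AE_start:
  assumes "N > 0"
  shows "AE \<omega> in Pwalk N d. snd (fst \<omega>) = 0"
proof -
  let ?A = "Tor N d \<times> {0::int}"
  let ?M1 = "measure_pmf (pmf_of_set ?A)"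
  let ?M2 = "stream_space (measure_pmf (pmf_of_set {0..<2 * d + 2}))"
  have fA: "finite ?A" "?A \<noteq> {}" using finite_Tor Tor_ne[OF assms] by auto
  interpret P2: prob_space ?M2
    by (rule prob_space.prob_space_stream_space) (rule prob_space_measure_pmf)
  interpret P1: prob_space ?M1 by (rule prob_space_measure_pmf)
  interpret PP: pair_sigma_finite ?M1 ?M2
    unfolding pair_sigma_finite_def
    using prob_space_imp_sigma_finite[OF prob_space_measure_pmf]
      prob_space_imp_sigma_finite[OF prob_space.prob_space_stream_space[OF prob_space_measure_pmf]]
    by blast
  have "AE x in ?M1 \<Otimes>\<^sub>M ?M2. snd (fst x) = 0"
  proof (rule PP.AE_pair_measure)
    have "{x \<in> space (?M1 \<Otimes>\<^sub>M ?M2). snd (fst x) = 0} = {y. snd y = 0} \<times> space ?M2"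
      by (auto simp: space_pair_measure)
    then show "{x \<in> space (?M1 \<Otimes>\<^sub>M ?M2). snd (fst x) = 0} \<in> sets (?M1 \<Otimes>\<^sub>M ?M2)"
      by simp
    show "AE x in ?M1. AE y in ?M2. snd (fst (x, y)) = 0"
      using fA by (simp add: AE_measure_pmf_iff)
  qed
  then show ?thesis unfolding Pwalk_def .
qed

lemma walk_Suc: "walk N d \<omega> (Suc j) = move N d (walk N d \<omega> j) (snd \<omega> !! j)"
  unfolding walk_def by (simp del: stake.simps add: stake_Suc)

lemma walk_0: "walk N d \<omega> 0 = fst \<omega>"
  unfolding walk_def by simp

lemma move_snd: "\<bar>snd (move N d x k) - snd x\<bar> \<le> 1"
  unfolding move_def by (auto simp: Let_def)

lemma walk_height:
  assumes "snd (fst \<omega>) = 0"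
  shows "\<bar>snd (walk N d \<omega> j)\<bar> \<le> int j"
proof (induction j)
  case 0 then show ?case using assms by (simp add: walk_0)
next
  case (Suc j)
  have "\<bar>snd (walk N d \<omega> (Suc j)) - snd (walk N d \<omega> j)\<bar> \<le> 1"
    unfolding walk_Suc by (rule move_snd)
  then show ?case using Suc by linarith
qed

definition pt :: "int \<Rightarrow> int \<Rightarrow> pt" where
  "pt k z = ((\<lambda>i. if i = 0 then k else 0), z)"

lemma pt_Ecyl: "d \<ge> 1 \<Longrightarrow> 0 \<le> k \<Longrightarrow> k < int N \<Longrightarrow> pt k z \<in> Ecyl N d"
  unfolding pt_def Ecyl_def Tor_def by auto

lemma pt_Uset: "d \<ge> 1 \<Longrightarrow> 0 \<le> k \<Longrightarrow> k \<le> 2 * isqrt N \<Longrightarrow> k < int N \<Longrightarrow> pt k z \<in> Uset N d"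
  unfolding Uset_def using pt_Ecyl[of d k N z] by (auto simp: pt_def intro!: exI[of _ k])

lemma pt_vert: "pt 0 z = vert z"
  unfolding pt_def vert_def by auto

lemma pt_move_right:
  assumes "d \<ge> 1" "0 \<le> k" "k + 1 < int N"
  shows "pt (k + 1) z = move N d (pt k z) 0"
  using assms unfolding pt_def move_def by (auto simp: Let_def fun_eq_iff)

lemma pt_move_left:
  assumes "d \<ge> 1" "1 \<le> k" "k < int N"
  shows "pt (k - 1) z = move N d (pt k z) 1"
  using assms unfolding pt_def move_def by (auto simp: Let_def fun_eq_iff)

lemma pt_move_up:
  shows "pt k (z + 1) = move N d (pt k z) (2 * d)"
  unfolding pt_def move_def by (auto simp: Let_def)

lemma pt_move_down:
  shows "pt k (z - 1) = move N d (pt k z) (2 * d + 1)"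
  unfolding pt_def move_def by (auto simp: Let_def)


lemma tdist_eq:
  assumes "0 \<le> k" "0 \<le> k'" "k < int N" "k' < int N" "2 * \<bar>k - k'\<bar> \<le> int N"
  shows "tdist N k k' = \<bar>k - k'\<bar>"
proof (cases "k' \<le> k")
  case True
  define D where "D = k - k'"
  have D: "0 \<le> D" "D < int N" "2 * D \<le> int N" using assms True unfolding D_def by auto
  have 1: "(k - k') mod int N = D" unfolding D_def[symmetric] using D by simp
  have 2: "(k' - k) mod int N = (if D = 0 then 0 else int N - D)"
  proof (cases "D = 0")
    case True then show ?thesis unfolding D_def by simp
  next
    case False
    have "(int N - D) mod int N = (- D + int N) mod int N" by simp
    also have "\<dots> = (- D) mod int N" by (rule mod_add_self2)
    also have "- D = k' - k" unfolding D_def by simp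
    finally have "(k' - k) mod int N = (int N - D) mod int N" by simp
    also have "\<dots> = int N - D" using D False by (intro mod_pos_pos_trivial) auto
    finally show ?thesis using False by simp
  qed
  show ?thesis unfolding tdist_def 1 2 using D D_def True by auto
next
  case False
  define D where "D = k' - k"
  have D: "0 \<le> D" "D < int N" "2 * D \<le> int N" using assms False unfolding D_def by auto
  have 1: "(k' - k) mod int N = D" unfolding D_def[symmetric] using D by simp
  have 2: "(k - k') mod int N = int N - D"
  proof -
    have "(int N - D) mod int N = (- D + int N) mod int N" by simp
    also have "\<dots> = (- D) mod int N" by (rule mod_add_self2)
    also have "- D = k - k'" unfolding D_def by simp
    finally have "(k - k') mod int N = (int N - D) mod int N" by simp
    also have "\<dots> = int N - D" using D False D_def by (intro mod_pos_pos_trivial) auto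
    finally show ?thesis .
  qed
  show ?thesis unfolding tdist_def 1 2 using D D_def False by auto
qed

lemma linf_pt:
  assumes "d \<ge> 1" "0 \<le> k" "0 \<le> k'" "k < int N" "k' < int N" "2 * \<bar>k - k'\<bar> \<le> int N"
  shows "linf N d (pt k z) (pt k' z') = max \<bar>k - k'\<bar> \<bar>z - z'\<bar>"
proof -
  have t0: "tdist N 0 0 = 0" unfolding tdist_def by simp
  have "{tdist N (fst (pt k z) i) (fst (pt k' z') i) | i. i < d} \<union> {0} = {\<bar>k - k'\<bar>, 0}"
    using assms tdist_eq[OF assms(2-6)] t0 unfolding pt_def by (auto intro!: exI[of _ 0])
  then show ?thesis unfolding linf_def using pt_def by simp
qed


lemma rtrancl_list:
  assumes "(a,b) \<in> Rl\<^sup>*"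
  shows "\<exists>ps. ps \<noteq> [] \<and> hd ps = a \<and> last ps = b \<and> (\<forall>i. Suc i < length ps \<longrightarrow> (ps!i, ps!Suc i) \<in> Rl)"
  using assms
proof (induct rule: rtrancl_induct)
  case base
  show ?case by (rule exI[of _ "[a]"]) simp
next
  case (step y z)
  then obtain ps where ps: "ps \<noteq> []" "hd ps = a" "last ps = y"
    "\<forall>i. Suc i < length ps \<longrightarrow> (ps!i, ps!Suc i) \<in> Rl" by blast
  have "\<forall>i. Suc i < length (ps @ [z]) \<longrightarrow> ((ps @ [z])!i, (ps @ [z])!Suc i) \<in> Rl"
  proof (intro allI impI)
    fix i assume i: "Suc i < length (ps @ [z])"
    show "((ps @ [z])!i, (ps @ [z])!Suc i) \<in> Rl"
    proof (cases "Suc i < length ps")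
      case True
      then show ?thesis using ps(4) by (simp add: nth_append)
    next
      case False
      then have ii: "Suc i = length ps" using i by simp
      then have ie: "i = length ps - Suc 0" by simp
      have "(ps @ [z])!i = ps!i" using ii by (simp add: nth_append)
      also have "\<dots> = y" using ps(1,3) ie by (simp add: last_conv_nth)
      finally have "(ps @ [z])!i = y" .
      moreover have "(ps @ [z])!Suc i = z" using ii by (simp add: nth_append)
      ultimately show ?thesis using step(2) by simp
    qed
  qed
  then show ?case using ps by (intro exI[of _ "ps @ [z]"]) simp
qed

lemma list_in:
  assumes "ps \<noteq> []" "hd ps \<in> A" "\<forall>i. Suc i < length ps \<longrightarrow> (ps!i, ps!Suc i) \<in> Rl"
    "\<And>x y. (x,y) \<in> Rl \<Longrightarrow> y \<in> A"
  shows "set ps \<subseteq> A"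
proof
  fix x assume "x \<in> set ps"
  then obtain j where j: "j < length ps" "x = ps!j" by (auto simp: in_set_conv_nth)
  show "x \<in> A"
  proof (cases j)
    case 0 then show ?thesis using j assms(1,2) by (simp add: hd_conv_nth)
  next
    case (Suc i)
    then have "(ps!i, ps!Suc i) \<in> Rl" using assms(3) j by simp
    then show ?thesis using assms(4) j Suc by simp
  qed
qed

lemma isqrt_bounds:
  assumes "N \<ge> 64"
  shows "8 \<le> isqrt N" "4 * isqrt N + 2 \<le> int N"
proof -
  have e8: "sqrt (64::real) = 8" by (rule real_sqrt_unique) simp_all
  have "(64::real) \<le> real N" using assms by simp
  then have "sqrt 64 \<le> sqrt (real N)" by (rule real_sqrt_le_mono)
  then have s8: "sqrt (real N) \<ge> 8" using e8 by simp
  then show r8: "8 \<le> isqrt N" unfolding isqrt_def by linarith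
  have "real_of_int (isqrt N) \<le> sqrt (real N)" unfolding isqrt_def by linarith
  moreover have "0 \<le> real_of_int (isqrt N)" using r8 by simp
  ultimately have "real_of_int (isqrt N) * real_of_int (isqrt N) \<le> sqrt (real N) * sqrt (real N)"
    by (intro mult_mono) auto
  then have "real_of_int (isqrt N * isqrt N) \<le> real N" by simp
  then have "isqrt N * isqrt N \<le> int N" by linarith
  moreover have "8 * isqrt N \<le> isqrt N * isqrt N" using r8 by (intro mult_right_mono) auto
  ultimately show "4 * isqrt N + 2 \<le> int N" using r8 by linarith
qed


definition ptc :: "int \<times> int \<Rightarrow> pt" where "ptc c = pt (fst c) (snd c)"

lemma TN_disc:
  assumes "TN N d \<omega> = enat n"
  shows "disconnects N d (trace N d \<omega> n)"
proof -
  have ex: "\<exists>m. disconnects N d (trace N d \<omega> m)"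
  proof (rule ccontr)
    assume "\<not> ?thesis"
    then have "TN N d \<omega> = \<infinity>" unfolding TN_def by simp
    then show False using assms by simp
  qed
  then have "n = (LEAST m. disconnects N d (trace N d \<omega> m))"
    using assms unfolding TN_def by simp
  then show ?thesis using LeastI_ex[OF ex] by simp
qed

lemma main_det:
  fixes d N n :: nat
  assumes d: "d \<ge> 2" and N: "N \<ge> 64" and st: "snd (fst \<omega>) = 0"
    and TNn: "TN N d \<omega> = enat n" and nb: "int n \<le> int N ^ (2 * d + 1)"
  shows "\<exists>zs p. \<bar>zs\<bar> \<le> int N ^ (2 * d + 1) \<and> star_path N d p \<and>
               hd p = vert zs \<and> last p \<in> sphere_inf N d (vert zs) (isqrt N) \<and>
               set p \<subseteq> Uset N d \<inter> trace N d \<omega> (the_enat (TN N d \<omega>))"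
proof -
  define r where "r = isqrt N"
  have r8: "8 \<le> r" and rN: "4 * r + 2 \<le> int N" using isqrt_bounds[OF N] unfolding r_def by auto
  have d1: "d \<ge> 1" using d by simp
  define S where "S = trace N d \<omega> n"
  have disc: "disconnects N d S" unfolding S_def by (rule TN_disc[OF TNn])
  have tr: "trace N d \<omega> (the_enat (TN N d \<omega>)) = S" unfolding S_def TNn by simp
  have hS: "\<bar>snd x\<bar> \<le> int n" if xS: "x \<in> S" for x
  proof -
    obtain j where j: "j \<in> {0..n}" "x = walk N d \<omega> j" using xS unfolding S_def trace_def by blast
    have "\<bar>snd x\<bar> \<le> int j" unfolding j(2) by (rule walk_height[OF st])
    then show ?thesis using j(1) by simp
  qed
  obtain M0 where M0: "\<And>M x y. M \<ge> M0 \<Longrightarrow> x \<in> Ecyl N d - S \<and> snd x \<le> - M \<and> y \<in> Ecyl N d - S \<and> snd y \<ge> M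
        \<Longrightarrow> (x, y) \<notin> ({(a, b). a \<notin> S \<and> b \<notin> S \<and> adj N d a b})\<^sup>*"
    using disc unfolding disconnects_def by blast
  define Mb where "Mb = max (max M0 1) (int n + 1)"
  define Bl where "Bl = {c \<in> box r Mb. ptc c \<in> S}"
  have inbox: "0 \<le> fst c \<and> fst c \<le> r \<and> - Mb \<le> snd c \<and> snd c \<le> Mb" if "c \<in> box r Mb" for c
    using that unfolding box_def by simp
  have cEcyl: "ptc c \<in> Ecyl N d" if "c \<in> box r Mb" for c
    using inbox[OF that] rN d1 unfolding ptc_def by (intro pt_Ecyl) auto
  have Blrow: "snd c \<noteq> Mb \<and> snd c \<noteq> - Mb" if "c \<in> Bl" for c
  proof -
    have "ptc c \<in> S" using that unfolding Bl_def by simp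
    then have "\<bar>snd (ptc c)\<bar> \<le> int n" by (rule hS)
    then have "\<bar>snd c\<bar> \<le> int n" unfolding ptc_def pt_def by simp
    then show ?thesis unfolding Mb_def by auto
  qed
  have r0: "0 \<le> r" using r8 by simp
  have Mb0: "0 \<le> Mb" unfolding Mb_def by simp
  have "Bl \<subseteq> box r Mb" unfolding Bl_def by auto
  note dual = duality[OF r0 Mb0 this Blrow]
  show ?thesis
  proof (cases "\<exists>c0 c. c0 \<in> box r Mb - Bl \<and> snd c0 = - Mb \<and> snd c = Mb \<and> (c0,c) \<in> (Rw r Mb Bl)\<^sup>*")
    case True
    then obtain c0 c where cc: "c0 \<in> box r Mb - Bl" "snd c0 = - Mb" "snd c = Mb" "(c0,c) \<in> (Rw r Mb Bl)\<^sup>*"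
      by blast
    define Erel where "Erel = {(a, b). a \<notin> S \<and> b \<notin> S \<and> adj N d a b}"
    have stepE: "(ptc x, ptc y) \<in> Erel" if xy: "(x,y) \<in> Rw r Mb Bl" for x y
    proof -
      have x: "x \<in> box r Mb" "x \<notin> Bl" and y: "y \<in> box r Mb" "y \<notin> Bl" and nxy: "nn x y"
        using xy unfolding Rw_def by auto
      have nS: "ptc x \<notin> S" "ptc y \<notin> S" using x y unfolding Bl_def by auto
      obtain k z where xkz: "x = (k,z)" by (cases x)
      obtain k' z' where ykz: "y = (k',z')" by (cases y)
      have bx: "0 \<le> k" "k \<le> r" using inbox[OF x(1)] xkz by auto
      have by': "0 \<le> k'" "k' \<le> r" using inbox[OF y(1)] ykz by auto
      have "\<bar>k - k'\<bar> + \<bar>z - z'\<bar> = 1" using nxy xkz ykz unfolding nn_def by simp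
      then consider "k' = k + 1" "z' = z" | "k' = k - 1" "z' = z" | "k' = k" "z' = z + 1" | "k' = k" "z' = z - 1"
        by arith
      then have "\<exists>m<2 * d + 2. ptc y = move N d (ptc x) m"
      proof cases
        case 1
        have "pt (k + 1) z = move N d (pt k z) 0" by (rule pt_move_right) (use bx by' rN d1 1 in auto)
        then have "ptc y = move N d (ptc x) 0" unfolding xkz ykz ptc_def using 1 by simp
        then show ?thesis by (intro exI[of _ 0]) simp
      next
        case 2
        have "pt (k - 1) z = move N d (pt k z) 1" by (rule pt_move_left) (use bx by' rN d1 2 in auto)
        then have "ptc y = move N d (ptc x) 1" unfolding xkz ykz ptc_def using 2 by simp
        then show ?thesis using d1 by (intro exI[of _ 1]) simp
      next
        case 3
        have "pt k (z + 1) = move N d (pt k z) (2 * d)" by (rule pt_move_up)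
        then have "ptc y = move N d (ptc x) (2 * d)" unfolding xkz ykz ptc_def using 3 by simp
        then show ?thesis by (intro exI[of _ "2 * d"]) simp
      next
        case 4
        have "pt k (z - 1) = move N d (pt k z) (2 * d + 1)" by (rule pt_move_down)
        then have "ptc y = move N d (ptc x) (2 * d + 1)" unfolding xkz ykz ptc_def using 4 by simp
        then show ?thesis by (intro exI[of _ "2 * d + 1"]) simp
      qed
      then have "adj N d (ptc x) (ptc y)" unfolding adj_def using cEcyl[OF x(1)] by simp
      then show ?thesis unfolding Erel_def using nS by simp
    qed
    have "(ptc c0, ptc c) \<in> Erel\<^sup>*"
      using cc(4)
    proof (induct rule: rtrancl_induct)
      case base then show ?case by simp
    next
      case (step y z)
      then show ?case using stepE[OF step(2)] by (meson rtrancl.rtrancl_into_rtrancl)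
    qed
    moreover have "c \<in> box r Mb" "c \<notin> Bl"
    proof -
      have "c \<in> box r Mb - Bl" using cc(4,1)
        by (induct rule: rtrancl_induct) (auto simp: Rw_def)
      then show "c \<in> box r Mb" "c \<notin> Bl" by auto
    qed
    moreover have "M0 \<le> Mb" unfolding Mb_def by simp
    ultimately have "ptc c0 \<in> Ecyl N d - S \<and> snd (ptc c0) \<le> - M0 \<and> ptc c \<in> Ecyl N d - S \<and> snd (ptc c) \<ge> M0"
    proof -
      assume a: "(ptc c0, ptc c) \<in> Erel\<^sup>*" "c \<in> box r Mb" "c \<notin> Bl" "M0 \<le> Mb"
      have "ptc c0 \<in> Ecyl N d" using cEcyl cc(1) by simp
      moreover have "ptc c0 \<notin> S" using cc(1) unfolding Bl_def by simp
      moreover have "ptc c \<in> Ecyl N d" using cEcyl a(2) by simp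
      moreover have "ptc c \<notin> S" using a(2,3) unfolding Bl_def by simp
      moreover have "snd (ptc c0) = - Mb" "snd (ptc c) = Mb" using cc(2,3) unfolding ptc_def pt_def by simp_all
      ultimately show ?thesis using a(4) by simp
    qed
    then have "(ptc c0, ptc c) \<notin> Erel\<^sup>*" using M0[of M0] unfolding Erel_def by simp
    then show ?thesis using \<open>(ptc c0, ptc c) \<in> Erel\<^sup>*\<close> by simp
  next
    case False
    then obtain c0 c where cc: "c0 \<in> Bl" "fst c0 = 0" "fst c = r" "(c0,c) \<in> (Rb Bl)\<^sup>*"
      using dual by blast
    define f where "f e = max (fst e) \<bar>snd e - snd c0\<bar>" for e
    define Rb' where "Rb' = {(x,y). (x,y) \<in> Rb Bl \<and> f x < r}"
    have claim: "(\<exists>e. (c0,e) \<in> Rb'\<^sup>* \<and> f e = r) \<or> ((c0,y) \<in> Rb'\<^sup>* \<and> f y < r)"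
      if "(c0,y) \<in> (Rb Bl)\<^sup>*" for y
      using that
    proof (induct rule: rtrancl_induct)
      case base
      show ?case using cc(2) r8 unfolding f_def by auto
    next
      case (step y z)
      show ?case
      proof (cases "\<exists>e. (c0,e) \<in> Rb'\<^sup>* \<and> f e = r")
        case True then show ?thesis by blast
      next
        case False
        then have y: "(c0,y) \<in> Rb'\<^sup>*" "f y < r" using step(3) by auto
        have "sadj y z" using step(2) unfolding Rb_def by simp
        then have "\<bar>fst y - fst z\<bar> \<le> 1" "\<bar>snd y - snd z\<bar> \<le> 1" unfolding sadj_def by auto
        then have fz: "f z \<le> f y + 1" unfolding f_def by linarith
        have "(y,z) \<in> Rb'" unfolding Rb'_def using step(2) y(2) by simp
        then have "(c0,z) \<in> Rb'\<^sup>*" using y(1) by simp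
        show ?thesis
        proof (cases "f z = r")
          case True
          then show ?thesis using \<open>(c0,z) \<in> Rb'\<^sup>*\<close> by blast
        next
          case False
          then show ?thesis using \<open>(c0,z) \<in> Rb'\<^sup>*\<close> fz y(2) by simp
        qed
      qed
    qed
    have "f c \<ge> r" unfolding f_def using cc(3) by simp
    then obtain e where e: "(c0,e) \<in> Rb'\<^sup>*" "f e = r" using claim[OF cc(4)] by auto
    obtain ps where ps: "ps \<noteq> []" "hd ps = c0" "last ps = e"
      "\<forall>i. Suc i < length ps \<longrightarrow> (ps!i, ps!Suc i) \<in> Rb'"
      using rtrancl_list[OF e(1)] by blast
    have psBl: "set ps \<subseteq> Bl"
      by (rule list_in[OF ps(1) _ ps(4)]) (use ps(2) cc(1) in \<open>auto simp: Rb'_def Rb_def\<close>)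
    have BlB: "c' \<in> box r Mb" "ptc c' \<in> S" if "c' \<in> Bl" for c'
      using that unfolding Bl_def by auto
    define p where "p = map ptc ps"
    define zs where "zs = snd c0"
    have eBl: "e \<in> Bl" using psBl ps(1,3) by auto
    have lin: "linf N d (ptc x) (ptc y) = max \<bar>fst x - fst y\<bar> \<bar>snd x - snd y\<bar>"
      if "x \<in> box r Mb" "y \<in> box r Mb" "\<bar>fst x - fst y\<bar> \<le> r" for x y
      unfolding ptc_def using inbox[OF that(1)] inbox[OF that(2)] that(3) rN d1
      by (intro linf_pt) auto
    have "\<bar>zs\<bar> \<le> int n" unfolding zs_def using hS[OF BlB(2)[OF cc(1)]] unfolding ptc_def pt_def by simp
    then have zsb: "\<bar>zs\<bar> \<le> int N ^ (2 * d + 1)" using nb by simp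
    have sp: "star_path N d p"
      unfolding star_path_def
    proof (intro conjI allI impI)
      show "p \<noteq> []" unfolding p_def using ps(1) by simp
      show "set p \<subseteq> Ecyl N d" unfolding p_def using psBl BlB cEcyl by auto
      fix i assume i: "Suc i < length p"
      then have i': "Suc i < length ps" unfolding p_def by simp
      have st: "(ps!i, ps!Suc i) \<in> Rb Bl" using ps(4) i' unfolding Rb'_def by auto
      then have xb: "ps!i \<in> Bl" "ps!Suc i \<in> Bl" and sa: "sadj (ps!i) (ps!Suc i)" unfolding Rb_def by auto
      have sa': "\<bar>fst (ps!i) - fst (ps!Suc i)\<bar> \<le> 1" "\<bar>snd (ps!i) - snd (ps!Suc i)\<bar> \<le> 1"
        "ps!i \<noteq> ps!Suc i" using sa unfolding sadj_def by auto
      then have "max \<bar>fst (ps!i) - fst (ps!Suc i)\<bar> \<bar>snd (ps!i) - snd (ps!Suc i)\<bar> = 1"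
        by (cases "ps!i", cases "ps!Suc i") auto
      moreover have "\<bar>fst (ps!i) - fst (ps!Suc i)\<bar> \<le> r" using sa'(1) r8 by simp
      ultimately have "linf N d (ptc (ps!i)) (ptc (ps!Suc i)) = 1"
        using lin[OF BlB(1)[OF xb(1)] BlB(1)[OF xb(2)]] by simp
      then show "star_nb N d (p ! i) (p ! Suc i)"
        unfolding star_nb_def p_def using i' cEcyl BlB xb by simp
    qed
    have hd: "hd p = vert zs"
      unfolding p_def zs_def using ps(1,2) cc(2) by (simp add: hd_map ptc_def pt_vert[symmetric])
    have c0b: "c0 \<in> box r Mb" using BlB(1)[OF cc(1)] .
    have eb: "e \<in> box r Mb" using BlB(1)[OF eBl] .
    have "linf N d (ptc c0) (ptc e) = max \<bar>fst c0 - fst e\<bar> \<bar>snd c0 - snd e\<bar>"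
      using lin[OF c0b eb] inbox[OF eb] cc(2) by simp
    also have "\<dots> = f e" unfolding f_def using cc(2) inbox[OF eb] by (simp add: abs_minus_commute)
    finally have "linf N d (vert zs) (ptc e) = isqrt N"
      using e(2) cc(2) unfolding zs_def r_def ptc_def by (simp add: pt_vert)
    then have la: "last p \<in> sphere_inf N d (vert zs) (isqrt N)"
      unfolding p_def sphere_inf_def using ps(1,3) cEcyl[OF eb] by (simp add: last_map)
    have "set p \<subseteq> Uset N d \<inter> S"
    proof
      fix x assume "x \<in> set p"
      then obtain y where y: "y \<in> set ps" "x = ptc y" unfolding p_def by auto
      have yb: "y \<in> Bl" using y(1) psBl by auto
      have "x \<in> Uset N d" unfolding y(2) ptc_def using inbox[OF BlB(1)[OF yb]] rN d1 r8
        by (intro pt_Uset) (auto simp: r_def)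
      then show "x \<in> Uset N d \<inter> S" using BlB(2)[OF yb] y(2) by simp
    qed
    then show ?thesis using zsb sp hd la tr by blast
  qed
qed


theorem lemma7p4:
  fixes d :: nat and \<gamma> :: real
  assumes "d \<ge> 2" and "\<gamma> > 0"
  shows "\<exists>c::nat. \<forall>N\<ge>c. AE \<omega> in Pwalk N d.
           (\<exists>n. TN N d \<omega> = enat n \<and> real n < \<gamma> * real N ^ (2 * d)) \<longrightarrow>
           (\<exists>zs p. \<bar>zs\<bar> \<le> int N ^ (2 * d + 1) \<and> star_path N d p \<and>
               hd p = vert zs \<and> last p \<in> sphere_inf N d (vert zs) (isqrt N) \<and>
               set p \<subseteq> Uset N d \<inter> trace N d \<omega> (the_enat (TN N d \<omega>)))"
proof (intro exI[of _ "nat \<lceil>\<gamma>\<rceil> + 64"] allI impI)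
  fix N :: nat assume N: "N \<ge> nat \<lceil>\<gamma>\<rceil> + 64"
  have N64: "N \<ge> 64" using N by simp
  have g1: "\<gamma> \<le> of_int \<lceil>\<gamma>\<rceil>" by (rule le_of_int_ceiling)
  have c0: "0 \<le> \<lceil>\<gamma>\<rceil>" using assms(2) by simp
  have g2: "real (nat \<lceil>\<gamma>\<rceil>) = of_int \<lceil>\<gamma>\<rceil>" using c0 by simp
  have g3: "nat \<lceil>\<gamma>\<rceil> \<le> N" using N by (rule order_trans[OF le_add1])
  then have g4: "real (nat \<lceil>\<gamma>\<rceil>) \<le> real N" by (simp only: of_nat_le_iff)
  have gN: "\<gamma> \<le> real N" using g1 g2 g4 by linarith
  have N0: "N > 0" using N64 by simp
  show "AE \<omega> in Pwalk N d.
           (\<exists>n. TN N d \<omega> = enat n \<and> real n < \<gamma> * real N ^ (2 * d)) \<longrightarrow>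
           (\<exists>zs p. \<bar>zs\<bar> \<le> int N ^ (2 * d + 1) \<and> star_path N d p \<and>
               hd p = vert zs \<and> last p \<in> sphere_inf N d (vert zs) (isqrt N) \<and>
               set p \<subseteq> Uset N d \<inter> trace N d \<omega> (the_enat (TN N d \<omega>)))"
    using AE_start[OF N0, of d]
  proof (rule AE_mp)
    show "AE \<omega> in Pwalk N d. snd (fst \<omega>) = 0 \<longrightarrow>
           (\<exists>n. TN N d \<omega> = enat n \<and> real n < \<gamma> * real N ^ (2 * d)) \<longrightarrow>
           (\<exists>zs p. \<bar>zs\<bar> \<le> int N ^ (2 * d + 1) \<and> star_path N d p \<and>
               hd p = vert zs \<and> last p \<in> sphere_inf N d (vert zs) (isqrt N) \<and>
               set p \<subseteq> Uset N d \<inter> trace N d \<omega> (the_enat (TN N d \<omega>)))"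
    proof (rule AE_I2, intro impI)
      fix \<omega> assume st: "snd (fst \<omega>) = 0"
        and ev: "\<exists>n. TN N d \<omega> = enat n \<and> real n < \<gamma> * real N ^ (2 * d)"
      then obtain n where n: "TN N d \<omega> = enat n" "real n < \<gamma> * real N ^ (2 * d)" by blast
      have "\<gamma> * real N ^ (2 * d) \<le> real N * real N ^ (2 * d)"
        using gN by (intro mult_right_mono) auto
      also have "\<dots> = real (N ^ (2 * d + 1))" by simp
      finally have "real n < real (N ^ (2 * d + 1))" using n(2) by linarith
      then have "n < N ^ (2 * d + 1)" by (simp only: of_nat_less_iff)
      then have "n \<le> N ^ (2 * d + 1)" by (rule less_imp_le)
      then have "int n \<le> int (N ^ (2 * d + 1))" by (simp only: of_nat_le_iff)
      then have nb: "int n \<le> int N ^ (2 * d + 1)" by (simp only: of_nat_power)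
      show "\<exists>zs p. \<bar>zs\<bar> \<le> int N ^ (2 * d + 1) \<and> star_path N d p \<and>
               hd p = vert zs \<and> last p \<in> sphere_inf N d (vert zs) (isqrt N) \<and>
               set p \<subseteq> Uset N d \<inter> trace N d \<omega> (the_enat (TN N d \<omega>))"
        by (rule main_det[OF assms(1) N64 st n(1) nb])
    qed
  qed
qed

end
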